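(* Let $\mathcal{H}$ be a real Hilbert space, $f:\mathcal{H}\to\mathbb{R}$ $\mu$-strongly convex and $L$-smooth with $0<\mu<L<\infty$, $g:\mathcal{H}\to\mathbb{R}\cup\{+\infty\}$ convex, proper and lower semicontinuous, $q=\mu/L$, and $x^\star$ the unique minimizer of $f+g$. Let the Prox-TMM iterates $z^k$ and the quantities $\mathcal{V}_k^\infty$ be as defined in the context. Then for every $k\in\mathbb{N}$ (i.e. $k\ge1$), $$\mu\|z^{k+1}-x^\star\|^2\le(1-\sqrt q)^2\,\mathcal{V}_k^\infty.$$
   Context: $\operatorname{Prox}^{\gamma}_g(x)=\operatorname{argmin}_z\big(g(z)+\frac{1}{2\gamma}\|x-z\|^2\big)$. Prox-TMM from $x^0\in\mathcal{H}$: $z^0=x^0$, and for $k\ge0$: $y^k=\frac{2\sqrt q}{1+\sqrt q}z^k+\frac{1-\sqrt q}{1+\sqrt q}x^k$, $\bar z^{k+1}=(1-\sqrt q)z^k+\sqrt q\,y^k-\frac{1}{\sqrt qL}\nabla f(y^k)$, $z^{k+1}=\operatorname{Prox}^{1/(\sqrt qL)}_g(\bar z^{k+1})$, $x^{k+1}=y^k-\frac1L\nabla f(y^k)-\sqrt q(\bar z^{k+1}-z^{k+1})$. Define $\mathcal{I}_f(x,y)=f(x)-f(y)-\langle\nabla f(y),x-y\rangle-\frac{\mu}{2}\|x-y\|^2-\frac{1}{2(L-\mu)}\|\nabla f(x)-\nabla f(y)-\mu(x-y)\|^2$ and $\mathcal{I}_g(x,y,s)=g(x)-g(y)-\langle s,x-y\rangle$.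 For $k\ge1$ let $s_g^k=\sqrt qL(\bar z^k-z^k)$, let $s_g^\star=-\nabla f(x^\star)$, and $$\mathcal{V}_k^\infty=(1-q)\mathcal{I}_f(y^{k-1},x^\star)+q\,\mathcal{I}_g(x^\star,z^k,s_g^k)+\sqrt q(\sqrt q-1)\mathcal{I}_g(z^k,x^\star,s_g^\star)+\frac1{2L}\|s_g^k-s_g^\star\|^2+\mu\|z^k-x^\star\|^2.$$ *)

theory Defs
  imports "HOL-Analysis.Analysis"
begin

definition strongly_convex :: "real \<Rightarrow> ('a::real_inner \<Rightarrow> real) \<Rightarrow> bool" where
  "strongly_convex \<mu> f \<longleftrightarrow> convex_on UNIV (\<lambda>x. f x - \<mu> / 2 * (norm x)\<^sup>2)"

definition ereal_convex :: "('a::real_vector \<Rightarrow> ereal) \<Rightarrow> bool" where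
  "ereal_convex g \<longleftrightarrow> (\<forall>x y t. 0 \<le> t \<and> t \<le> 1 \<longrightarrow>
      g ((1 - t) *\<^sub>R x + t *\<^sub>R y) \<le> ereal (1 - t) * g x + ereal t * g y)"

definition ereal_proper :: "('a \<Rightarrow> ereal) \<Rightarrow> bool" where
  "ereal_proper g \<longleftrightarrow> (\<forall>x. g x \<noteq> -\<infinity>) \<and> (\<exists>x. g x < \<infinity>)"

definition lsc :: "('a::topological_space \<Rightarrow> ereal) \<Rightarrow> bool" where
  "lsc g \<longleftrightarrow> (\<forall>x. g x \<le> Liminf (at x) g)"

definition is_prox :: "('a::real_normed_vector \<Rightarrow> ereal) \<Rightarrow> real \<Rightarrow> 'a \<Rightarrow> 'a \<Rightarrow> bool" where
  "is_prox g \<gamma> x z \<longleftrightarrow> (\<forall>w. g z + ereal (1 / (2 * \<gamma>) * (norm (x - z))\<^sup>2)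
                              \<le> g w + ereal (1 / (2 * \<gamma>) * (norm (x - w))\<^sup>2))"

definition I_f :: "real \<Rightarrow> real \<Rightarrow> ('a::real_inner \<Rightarrow> real) \<Rightarrow> ('a \<Rightarrow> 'a) \<Rightarrow> 'a \<Rightarrow> 'a \<Rightarrow> real" where
  "I_f \<mu> L f df x y = f x - f y - inner (df y) (x - y) - \<mu> / 2 * (norm (x - y))\<^sup>2
     - 1 / (2 * (L - \<mu>)) * (norm (df x - df y - \<mu> *\<^sub>R (x - y)))\<^sup>2"

definition I_g :: "('a::real_inner \<Rightarrow> ereal) \<Rightarrow> 'a \<Rightarrow> 'a \<Rightarrow> 'a \<Rightarrow> ereal" where
  "I_g g x y s = g x - g y - ereal (inner s (x - y))"

end

theory Submission
  imports Defs
begin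


lemma line_deriv:
  fixes f :: "'a::real_inner \<Rightarrow> real"
  assumes grad: "\<And>u. (f has_derivative (\<lambda>h. inner (df u) h)) (at u)"
  shows "((\<lambda>t. f (u + t *\<^sub>R d)) has_real_derivative inner (df (u + t *\<^sub>R d)) d) (at t)"
proof -
  have l: "((\<lambda>t. u + t *\<^sub>R d) has_derivative (\<lambda>h. h *\<^sub>R d)) (at t)"
    by (auto intro!: derivative_eq_intros)
  have "((\<lambda>t. f (u + t *\<^sub>R d)) has_derivative (\<lambda>h. inner (df (u + t *\<^sub>R d)) (h *\<^sub>R d))) (at t)"
    using has_derivative_compose[OF l grad] by simp
  moreover have "(\<lambda>h. inner (df (u + t *\<^sub>R d)) (h *\<^sub>R d)) = (*) (inner (df (u + t *\<^sub>R d)) d)"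
    by (auto simp: fun_eq_iff)
  ultimately show ?thesis unfolding has_field_derivative_def by simp
qed

lemma descent_two_sided:
  fixes f :: "'a::real_inner \<Rightarrow> real"
  assumes grad: "\<And>u. (f has_derivative (\<lambda>h. inner (df u) h)) (at u)"
    and smooth: "\<And>u v. norm (df u - df v) \<le> L * norm (u - v)"
  shows "\<bar>f v - f u - inner (df u) (v - u)\<bar> \<le> L / 2 * (norm (v - u))\<^sup>2"
proof -
  define d where "d = v - u"
  define \<psi> where "\<psi> t = f (u + t *\<^sub>R d) - t * inner (df u) d" for t
  have D: "(\<psi> has_real_derivative (inner (df (u + t *\<^sub>R d)) d - inner (df u) d)) (at t)" for t
    unfolding \<psi>_def by (auto intro!: derivative_eq_intros line_deriv[OF grad])
  have bnd: "\<bar>inner (df (u + t *\<^sub>R d)) d - inner (df u) d\<bar> \<le> L * t * (norm d)\<^sup>2" if "0 \<le> t" for t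
  proof -
    have "\<bar>inner (df (u + t *\<^sub>R d)) d - inner (df u) d\<bar> = \<bar>inner (df (u + t *\<^sub>R d) - df u) d\<bar>"
      by (simp add: inner_diff_left)
    also have "\<dots> \<le> norm (df (u + t *\<^sub>R d) - df u) * norm d" by (rule Cauchy_Schwarz_ineq2)
    also have "\<dots> \<le> (L * norm (t *\<^sub>R d)) * norm d"
      using smooth[of "u + t *\<^sub>R d" u] by (simp add: mult_right_mono)
    also have "\<dots> = L * t * (norm d)\<^sup>2" using that by (simp add: power2_eq_square)
    finally show ?thesis .
  qed
  have up: "\<psi> 1 - L/2 * 1^2 * (norm d)\<^sup>2 \<le> \<psi> 0 - L/2 * 0^2 * (norm d)\<^sup>2"
  proof (rule deriv_nonpos_imp_antimono[where g = "\<lambda>t. \<psi> t - L/2 * t^2 * (norm d)\<^sup>2"])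
    fix t :: real assume "t \<in> {0..1}"
    show "((\<lambda>t. \<psi> t - L/2 * t^2 * (norm d)\<^sup>2) has_real_derivative
       ((inner (df (u + t *\<^sub>R d)) d - inner (df u) d) - L * t * (norm d)\<^sup>2)) (at t)"
      by (auto intro!: derivative_eq_intros D)
    show "(inner (df (u + t *\<^sub>R d)) d - inner (df u) d) - L * t * (norm d)\<^sup>2 \<le> 0"
      using bnd[of t] \<open>t \<in> {0..1}\<close> by auto
  qed simp
  have lo: "\<psi> 1 + L/2 * 1^2 * (norm d)\<^sup>2 \<ge> \<psi> 0 + L/2 * 0^2 * (norm d)\<^sup>2"
  proof (rule deriv_nonneg_imp_mono[where g = "\<lambda>t. \<psi> t + L/2 * t^2 * (norm d)\<^sup>2"])
    fix t :: real assume "t \<in> {0..1}"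
    show "((\<lambda>t. \<psi> t + L/2 * t^2 * (norm d)\<^sup>2) has_real_derivative
       ((inner (df (u + t *\<^sub>R d)) d - inner (df u) d) + L * t * (norm d)\<^sup>2)) (at t)"
      by (auto intro!: derivative_eq_intros D)
    show "(inner (df (u + t *\<^sub>R d)) d - inner (df u) d) + L * t * (norm d)\<^sup>2 \<ge> 0"
      using bnd[of t] \<open>t \<in> {0..1}\<close> by auto
  qed simp
  have e: "\<psi> 1 = f v - inner (df u) (v - u)" "\<psi> 0 = f u" unfolding \<psi>_def d_def by auto
  from up lo have "f v - inner (df u) (v - u) - L/2 * (norm d)\<^sup>2 \<le> f u" "f u \<le> f v - inner (df u) (v - u) + L/2 * (norm d)\<^sup>2"
    unfolding e by simp_all
  then show ?thesis unfolding d_def abs_le_iff by linarith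
qed

lemma eps_le:
  fixes a b C :: real
  assumes h: "\<And>t. 0 < t \<Longrightarrow> t \<le> 1 \<Longrightarrow> a \<le> b + t * C"
  shows "a \<le> b"
proof (rule ccontr)
  assume "\<not> a \<le> b"
  then have ab: "a > b" by simp
  show False
  proof (cases "C \<le> 0")
    case True
    then show False using h[of 1] ab by simp
  next
    case False
    define t where "t = min 1 ((a - b) / (2 * C))"
    have t0: "0 < t" using False ab by (simp add: t_def)
    have t1: "t \<le> 1" by (simp add: t_def)
    have "t \<le> (a - b) / (2 * C)" by (simp add: t_def)
    then have "t * (2 * C) \<le> a - b" using False by (simp add: le_divide_eq)
    then show False using h[OF t0 t1] ab by simp
  qed
qed

lemma lin_aux:
  fixes X \<mu> nu t ud dd fu fv g L :: real
  assumes c: "X - \<mu>/2*(nu + 2*t*ud + t^2*dd) \<le> (1-t)*(fu - \<mu>/2*nu) + t*(fv - \<mu>/2*(nu + 2*ud + dd))"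
    and ds: "fu + t*g - L/2*(t^2*dd) \<le> X"
  shows "t*g - L/2*t^2*dd - \<mu>/2*(2*t*ud + t^2*dd) \<le> t*(fv - fu) - t*\<mu>/2*(2*ud + dd)"
proof -
  have "t*(fv - fu) - t*\<mu>/2*(2*ud + dd) - (t*g - L/2*t^2*dd - \<mu>/2*(2*t*ud + t^2*dd))
     = (((1-t)*(fu - \<mu>/2*nu) + t*(fv - \<mu>/2*(nu + 2*ud + dd))) - (X - \<mu>/2*(nu + 2*t*ud + t^2*dd)))
       + (X - (fu + t*g - L/2*(t^2*dd)))"
    by (simp add: field_simps power2_eq_square)
  moreover have "0 \<le> ((1-t)*(fu - \<mu>/2*nu) + t*(fv - \<mu>/2*(nu + 2*ud + dd))) - (X - \<mu>/2*(nu + 2*t*ud + t^2*dd))"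
    using c by simp
  moreover have "0 \<le> X - (fu + t*g - L/2*(t^2*dd))" using ds by simp
  ultimately show ?thesis by linarith
qed

lemma sc_lower:
  fixes f :: "'a::real_inner \<Rightarrow> real"
  assumes grad: "\<And>u. (f has_derivative (\<lambda>h. inner (df u) h)) (at u)"
    and smooth: "\<And>u v. norm (df u - df v) \<le> L * norm (u - v)"
    and sconv: "strongly_convex \<mu> f"
  shows "f u + inner (df u) (v - u) + \<mu> / 2 * (norm (v - u))\<^sup>2 \<le> f v"
proof -
  define d where "d = v - u"
  have cv: "convex_on UNIV (\<lambda>x. f x - \<mu> / 2 * (norm x)\<^sup>2)" using sconv unfolding strongly_convex_def .
  have "0 \<le> (f v - f u - inner (df u) d - \<mu> / 2 * (norm d)\<^sup>2) + t * ((L + \<mu>) / 2 * (norm d)\<^sup>2)"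
    if t0: "0 < t" and t1: "t \<le> 1" for t
  proof -
    have wt: "(1 - t) *\<^sub>R u + t *\<^sub>R v = u + t *\<^sub>R d" by (simp add: d_def algebra_simps)
    have c: "f (u + t *\<^sub>R d) - \<mu> / 2 * (norm (u + t *\<^sub>R d))\<^sup>2
        \<le> (1 - t) * (f u - \<mu> / 2 * (norm u)\<^sup>2) + t * (f v - \<mu> / 2 * (norm v)\<^sup>2)"
      using convex_onD[OF cv, of t u v] t0 t1 wt by simp
    have ds: "\<bar>f (u + t *\<^sub>R d) - f u - inner (df u) (t *\<^sub>R d)\<bar> \<le> L / 2 * (norm (t *\<^sub>R d))\<^sup>2"
      using descent_two_sided[OF grad smooth, where u=u and v="u + t *\<^sub>R d"] by simp
    have n1: "(norm (u + t *\<^sub>R d))\<^sup>2 = (norm u)\<^sup>2 + 2 * t * inner u d + t^2 * (norm d)\<^sup>2"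
      by (simp only: power2_norm_eq_inner) (simp add: inner_add_left inner_add_right inner_commute algebra_simps power2_eq_square)
    have n2: "(norm v)\<^sup>2 = (norm u)\<^sup>2 + 2 * inner u d + (norm d)\<^sup>2"
      unfolding d_def by (simp add: power2_norm_eq_inner inner_diff_left inner_diff_right inner_commute algebra_simps)
    have n3: "(norm (t *\<^sub>R d))\<^sup>2 = t^2 * (norm d)\<^sup>2" by (simp add: power_mult_distrib)
    have i1: "inner (df u) (t *\<^sub>R d) = t * inner (df u) d" by simp
    have "t * (inner (df u) d) - L / 2 * t^2 * (norm d)\<^sup>2 - \<mu> / 2 * (2 * t * inner u d + t^2 * (norm d)\<^sup>2)
        \<le> t * (f v - f u) - t * \<mu> / 2 * (2 * inner u d + (norm d)\<^sup>2)"
    proof (rule lin_aux)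
      show "f (u + t *\<^sub>R d) - \<mu>/2*((norm u)\<^sup>2 + 2*t*inner u d + t^2*(norm d)\<^sup>2)
        \<le> (1-t)*(f u - \<mu>/2*(norm u)\<^sup>2) + t*(f v - \<mu>/2*((norm u)\<^sup>2 + 2*inner u d + (norm d)\<^sup>2))"
        using c unfolding n1 n2 .
      show "f u + t * inner (df u) d - L/2*(t^2*(norm d)\<^sup>2) \<le> f (u + t *\<^sub>R d)"
        using ds unfolding n3 i1 abs_le_iff by linarith
    qed
    then have "t * (inner (df u) d + \<mu> / 2 * (norm d)\<^sup>2 - (L + \<mu>) / 2 * t * (norm d)\<^sup>2) \<le> t * (f v - f u)"
      by (simp add: field_simps power2_eq_square)
    then have "inner (df u) d + \<mu> / 2 * (norm d)\<^sup>2 - (L + \<mu>) / 2 * t * (norm d)\<^sup>2 \<le> f v - f u"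
      using t0 by (simp add: mult_le_cancel_left_pos)
    moreover have "(L + \<mu>) / 2 * t * (norm d)\<^sup>2 = t * ((L + \<mu>) / 2 * (norm d)\<^sup>2)" by simp
    ultimately show ?thesis by linarith
  qed
  then have "0 \<le> f v - f u - inner (df u) d - \<mu> / 2 * (norm d)\<^sup>2"
    by (rule eps_le[where C = "(L + \<mu>) / 2 * (norm d)\<^sup>2"])
  then show ?thesis unfolding d_def by simp
qed


lemma interp_aux:
  fixes M L \<mu> fu fv fw pd A B dG GG dd :: real
  assumes M0: "0 < M" and LM: "L = M + \<mu>"
    and low: "fv + (pd - A/M) + \<mu>/2*(dd - 2*dG/M + GG/M^2) \<le> fw"
    and up: "fw \<le> fu + (- B/M) + L/2*(GG/M^2)"
    and rel: "B - A = GG + \<mu>*dG"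
  shows "0 \<le> fu - fv - pd - \<mu>/2*dd - 1/(2*M)*GG"
proof -
  have "fu - fv - pd - \<mu>/2*dd - 1/(2*M)*GG
     = (fu + (- B/M) + L/2*(GG/M^2) - fw) + (fw - (fv + (pd - A/M) + \<mu>/2*(dd - 2*dG/M + GG/M^2)))
       + ((B - A) - (GG + \<mu>*dG))/M"
    using M0 unfolding LM by (simp add: field_simps power2_eq_square)
  moreover have "((B - A) - (GG + \<mu>*dG))/M = 0" using rel by simp
  ultimately show ?thesis using low up by linarith
qed

lemma interp:
  fixes f :: "'a::real_inner \<Rightarrow> real"
  assumes grad: "\<And>u. (f has_derivative (\<lambda>h. inner (df u) h)) (at u)"
    and smooth: "\<And>u v. norm (df u - df v) \<le> L * norm (u - v)"
    and sconv: "strongly_convex \<mu> f"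
    and muL: "\<mu> < L"
  shows "0 \<le> I_f \<mu> L f df u v"
proof -
  define M where "M = L - \<mu>"
  have M0: "0 < M" using muL by (simp add: M_def)
  define d where "d = u - v"
  define G where "G = df u - df v - \<mu> *\<^sub>R d"
  define w where "w = u - (1/M) *\<^sub>R G"
  have low: "f v + inner (df v) (w - v) + \<mu> / 2 * (norm (w - v))\<^sup>2 \<le> f w"
    by (rule sc_lower[OF grad smooth sconv])
  have up: "f w \<le> f u + inner (df u) (w - u) + L / 2 * (norm (w - u))\<^sup>2"
    using descent_two_sided[OF grad smooth, where u=u and v=w] unfolding abs_le_iff by linarith
  have wv: "w - v = d - (1/M) *\<^sub>R G" by (simp add: w_def d_def)
  have wu: "w - u = - ((1/M) *\<^sub>R G)" by (simp add: w_def)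
  have e1: "inner (df v) (w - v) = inner (df v) d - inner (df v) G / M"
    unfolding wv by (simp add: inner_diff_right)
  have e2: "(norm (w - v))\<^sup>2 = inner d d - 2 * inner d G / M + inner G G / M^2"
    unfolding wv power2_norm_eq_inner
    by (simp add: inner_diff_left inner_diff_right inner_commute power2_eq_square)
  have e3: "inner (df u) (w - u) = - inner (df u) G / M"
    unfolding wu by simp
  have e4: "(norm (w - u))\<^sup>2 = inner G G / M^2"
    unfolding wu power2_norm_eq_inner by (simp add: power2_eq_square)
  have rel: "inner (df u) G - inner (df v) G = inner G G + \<mu> * inner d G"
  proof -
    have "df u - df v = G + \<mu> *\<^sub>R d" by (simp add: G_def)
    then have "inner (df u - df v) G = inner (G + \<mu> *\<^sub>R d) G" by simp
    then show ?thesis by (simp add: inner_diff_left inner_add_left)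
  qed
  have "0 \<le> f u - f v - inner (df v) d - \<mu>/2*(inner d d) - 1/(2*M)*(inner G G)"
  proof (rule interp_aux[OF M0 _ _ _ rel])
    show "L = M + \<mu>" by (simp add: M_def)
    show "f v + (inner (df v) d - inner (df v) G / M) + \<mu>/2*(inner d d - 2*inner d G/M + inner G G/M^2) \<le> f w"
      using low unfolding e1 e2 .
    show "f w \<le> f u + (- inner (df u) G / M) + L/2*(inner G G/M^2)"
      using up unfolding e3 e4 .
  qed
  then show ?thesis
    unfolding I_f_def M_def[symmetric] d_def[symmetric] G_def[symmetric]
    by (simp add: power2_norm_eq_inner)
qed


lemma prox_fin:
  fixes g :: "'a::real_inner \<Rightarrow> ereal"
  assumes g_proper: "ereal_proper g" and px: "is_prox g \<gamma> x z"
  shows "\<exists>gz. g z = ereal gz"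
proof -
  obtain w0 where w0: "g w0 < \<infinity>" using g_proper unfolding ereal_proper_def by auto
  have "g z + ereal (1 / (2 * \<gamma>) * (norm (x - z))\<^sup>2) \<le> g w0 + ereal (1 / (2 * \<gamma>) * (norm (x - w0))\<^sup>2)"
    using px unfolding is_prox_def by blast
  also have "\<dots> < \<infinity>" using w0 by simp
  finally have "g z < \<infinity>" by auto
  moreover have "g z \<noteq> -\<infinity>" using g_proper unfolding ereal_proper_def by auto
  ultimately show ?thesis by (cases "g z") auto
qed

lemma prox_subgrad:
  fixes g :: "'a::real_inner \<Rightarrow> ereal"
  assumes g_conv: "ereal_convex g" and g_proper: "ereal_proper g" and px: "is_prox g \<gamma> x z"
    and gam: "0 < \<gamma>"
  shows "0 \<le> I_g g w z ((1/\<gamma>) *\<^sub>R (x - z))"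
proof -
  obtain gz where gz: "g z = ereal gz" using prox_fin[OF g_proper px] by auto
  show ?thesis
  proof (cases "g w = \<infinity>")
    case True
    then show ?thesis unfolding I_g_def gz by simp
  next
    case False
    moreover have "g w \<noteq> -\<infinity>" using g_proper unfolding ereal_proper_def by auto
    ultimately obtain gw where gw: "g w = ereal gw" by (cases "g w") auto
    define c where "c = 1 / (2 * \<gamma>)"
    define e where "e = x - z"
    define s where "s = (1/\<gamma>) *\<^sub>R e"
    have "gz + inner s (w - z) \<le> gw + t * (c * (norm (w - z))\<^sup>2)" if t0: "0 < t" and t1: "t \<le> 1" for t
    proof -
      define wt where "wt = (1 - t) *\<^sub>R z + t *\<^sub>R w"
      have cv: "g wt \<le> ereal (1 - t) * g z + ereal t * g w"
        using g_conv t0 t1 unfolding ereal_convex_def wt_def by auto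
      have pr: "g z + ereal (c * (norm (x - z))\<^sup>2) \<le> g wt + ereal (c * (norm (x - wt))\<^sup>2)"
        using px unfolding is_prox_def c_def by blast
      have "ereal (gz + c * (norm (x - z))\<^sup>2) \<le> ereal ((1 - t) * gz + t * gw + c * (norm (x - wt))\<^sup>2)"
      proof -
        have "ereal (gz + c * (norm (x - z))\<^sup>2) = g z + ereal (c * (norm (x - z))\<^sup>2)" using gz by simp
        also have "\<dots> \<le> g wt + ereal (c * (norm (x - wt))\<^sup>2)" by (rule pr)
        also have "\<dots> \<le> ereal (1 - t) * g z + ereal t * g w + ereal (c * (norm (x - wt))\<^sup>2)"
          using cv by (rule add_right_mono)
        also have "\<dots> = ereal ((1 - t) * gz + t * gw + c * (norm (x - wt))\<^sup>2)" using gz gw by simp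
        finally show ?thesis .
      qed
      then have r1: "gz + c * (norm e)\<^sup>2 \<le> (1 - t) * gz + t * gw + c * (norm (x - wt))\<^sup>2"
        by (simp add: e_def)
      have xw: "x - wt = e - t *\<^sub>R (w - z)" by (simp add: wt_def e_def algebra_simps)
      have n: "(norm (x - wt))\<^sup>2 = (norm e)\<^sup>2 - 2 * t * inner e (w - z) + t^2 * (norm (w - z))\<^sup>2"
        unfolding xw power2_norm_eq_inner
        by (simp add: inner_diff_left inner_diff_right inner_commute power2_eq_square algebra_simps)
      have si: "inner s (w - z) = 2 * c * inner e (w - z)" using gam by (simp add: s_def c_def)
      have "t * (gz + inner s (w - z)) \<le> t * (gw + t * (c * (norm (w - z))\<^sup>2))"
        using r1 unfolding n si by (simp add: algebra_simps power2_eq_square)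
      then show ?thesis using t0 by (simp add: mult_le_cancel_left_pos)
    qed
    then have "gz + inner s (w - z) \<le> gw" by (rule eps_le)
    then show ?thesis unfolding I_g_def gz gw s_def e_def by simp
  qed
qed

lemma xs_subgrad:
  fixes f :: "'a::real_inner \<Rightarrow> real" and g :: "'a \<Rightarrow> ereal"
  assumes grad: "\<And>u. (f has_derivative (\<lambda>h. inner (df u) h)) (at u)"
    and smooth: "\<And>u v. norm (df u - df v) \<le> L * norm (u - v)"
    and g_conv: "ereal_convex g" and g_proper: "ereal_proper g"
    and xs_min: "\<And>u. ereal (f xs) + g xs \<le> ereal (f u) + g u"
  shows "\<exists>gx. g xs = ereal gx" and "0 \<le> I_g g w xs (- df xs)"
proof -
  obtain w0 where w0: "g w0 < \<infinity>" using g_proper unfolding ereal_proper_def by auto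
  have "ereal (f w0) + g w0 < \<infinity>" using w0 by (cases "g w0") auto
  then have "ereal (f xs) + g xs < \<infinity>" using xs_min[of w0] by (rule le_less_trans[rotated])
  then have "g xs < \<infinity>" by (cases "g xs") auto
  moreover have "g xs \<noteq> -\<infinity>" using g_proper unfolding ereal_proper_def by auto
  ultimately obtain gx where gx: "g xs = ereal gx" by (cases "g xs") auto
  then show "\<exists>gx. g xs = ereal gx" by blast
  show "0 \<le> I_g g w xs (- df xs)"
  proof (cases "g w = \<infinity>")
    case True
    then show ?thesis unfolding I_g_def gx by simp
  next
    case False
    moreover have "g w \<noteq> -\<infinity>" using g_proper unfolding ereal_proper_def by auto
    ultimately obtain gw where gw: "g w = ereal gw" by (cases "g w") auto
    define d where "d = w - xs"
    have "gx - inner (df xs) d \<le> gw + t * (L / 2 * (norm d)\<^sup>2)" if t0: "0 < t" and t1: "t \<le> 1" for t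
    proof -
      define wt where "wt = (1 - t) *\<^sub>R xs + t *\<^sub>R w"
      have wt': "wt = xs + t *\<^sub>R d" by (simp add: wt_def d_def algebra_simps)
      have cv: "g wt \<le> ereal (1 - t) * g xs + ereal t * g w"
        using g_conv t0 t1 unfolding ereal_convex_def wt_def by auto
      have "ereal (f xs + gx) \<le> ereal (f wt + ((1 - t) * gx + t * gw))"
      proof -
        have "ereal (f xs + gx) = ereal (f xs) + g xs" using gx by simp
        also have "\<dots> \<le> ereal (f wt) + g wt" by (rule xs_min)
        also have "\<dots> \<le> ereal (f wt) + (ereal (1 - t) * g xs + ereal t * g w)"
          using cv by (rule add_left_mono)
        also have "\<dots> = ereal (f wt + ((1 - t) * gx + t * gw))" using gx gw by simp
        finally show ?thesis .
      qed
      then have r1: "f xs + gx \<le> f wt + ((1 - t) * gx + t * gw)" by simp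
      have ds: "f wt \<le> f xs + t * inner (df xs) d + L / 2 * (t^2 * (norm d)\<^sup>2)"
        using descent_two_sided[OF grad smooth, where u=xs and v=wt] unfolding wt' abs_le_iff
        by (simp add: power_mult_distrib)
      have "t * (gx - inner (df xs) d) \<le> t * (gw + t * (L / 2 * (norm d)\<^sup>2))"
        using r1 ds by (simp add: algebra_simps power2_eq_square)
      then show ?thesis using t0 by (simp add: mult_le_cancel_left_pos)
    qed
    then have "gx - inner (df xs) d \<le> gw" by (rule eps_le)
    then show ?thesis unfolding I_g_def gx gw d_def by simp
  qed
qed


lemma core_real:
  fixes r F0 F1 G0 G1 I1 I2 I3 I4 qq pq pp pa py pz ps sz ss zz ww sw tw st tt tz pt :: real
  assumes h1: "(1-r^2) * I1 = (1-r^2) * F0 - qq/2"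
  and h2: "(1-r^2) * I2 = (1-r^2) * (F0 - F1 - pa + py) - (qq - 2 * pq + pp)/2"
  and h3: "(1-r^2) * I3 = (1-r^2) * F1 - pp/2"
  and h4: "(1-r^2) * I4 = (1-r^2) * (-F1 + py) - pp/2"
  and hy: "(1-r^2) * py = (1-r) * (2 * r * pz + (1-r) * ((1-r^2) * pa - pq - ps))"
  and hz1: "r^2 * ww = r^2 * (1-r)^2 * zz + pp + tt - 2 * r * (1-r) * pz - 2 * r * (1-r) * tz + 2 * pt"
  and hz2: "r * sw = r * (1-r) * sz - ps - st"
  and hz3: "r * tw = r * (1-r) * tz - pt - tt"
  shows "(1-r)^2 * ((1-r^2) * I1 + r^2 * (-G0 + sz) + r * (r-1) * G0 + ss/2 + r^2 * zz) - r^2 * ww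
    = (1-r)^2 * (1-r^2) * I2 + (1-r^2) * I3 + r * (2-r) * (1-r^2) * I4 + r * (1-r)^2 * (G1 - G0 - (sw - sz))
      + r * (2-(1-r)^2) * G1 + 2 * r * (-G1 + tw) + (1-r)^2/2 * (ss - 2 * st + tt) + (1-(1-r)^2/2) * tt"
proof -
  have "(1-r)^2 * ((1-r^2) * I1 + r^2 * (-G0 + sz) + r * (r-1) * G0 + ss/2 + r^2 * zz) - r^2 * ww
    - ((1-r)^2 * (1-r^2) * I2 + (1-r^2) * I3 + r * (2-r) * (1-r^2) * I4 + r * (1-r)^2 * (G1 - G0 - (sw - sz))
      + r * (2-(1-r)^2) * G1 + 2 * r * (-G1 + tw) + (1-r)^2/2 * (ss - 2 * st + tt) + (1-(1-r)^2/2) * tt)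
    = (1-r)^2 * ((1-r^2) * I1 - ((1-r^2) * F0 - qq/2)) - (1-r)^2 * ((1-r^2) * I2 - ((1-r^2) * (F0 - F1 - pa + py) - (qq - 2 * pq + pp)/2))
      - ((1-r^2) * I3 - ((1-r^2) * F1 - pp/2)) - r * (2-r) * ((1-r^2) * I4 - ((1-r^2) * (-F1 + py) - pp/2))
      - ((1-r^2) * py - (1-r) * (2 * r * pz + (1-r) * ((1-r^2) * pa - pq - ps)))
      - (r^2 * ww - (r^2 * (1-r)^2 * zz + pp + tt - 2 * r * (1-r) * pz - 2 * r * (1-r) * tz + 2 * pt))
      + (1-r)^2 * (r * sw - (r * (1-r) * sz - ps - st))
      - 2 * (r * tw - (r * (1-r) * tz - pt - tt))"
    by (simp add: field_simps power2_eq_square)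
  then show ?thesis using h1 h2 h3 h4 hy hz1 hz2 hz3 by simp
qed


lemma If_red:
  fixes f :: "'a::real_inner \<Rightarrow> real"
  shows "I_f \<mu> L f df u v
   = (f u - fx - inner gs (u - xs) - \<mu>/2*(norm (u - xs))\<^sup>2) - (f v - fx - inner gs (v - xs) - \<mu>/2*(norm (v - xs))\<^sup>2)
     - inner (df v - gs - \<mu> *\<^sub>R (v - xs)) ((u - xs) - (v - xs))
     - (norm ((df u - gs - \<mu> *\<^sub>R (u - xs)) - (df v - gs - \<mu> *\<^sub>R (v - xs))))\<^sup>2 / (2*(L-\<mu>))"
proof -
  define a where "a = u - xs"
  define b where "b = v - xs"
  have uv: "u - v = a - b" by (simp add: a_def b_def)
  have G: "(df u - gs - \<mu> *\<^sub>R (u - xs)) - (df v - gs - \<mu> *\<^sub>R (v - xs)) = df u - df v - \<mu> *\<^sub>R (u - v)"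
    by (simp add: algebra_simps)
  have n: "(norm (a - b))\<^sup>2 = (norm a)\<^sup>2 - 2 * inner a b + (norm b)\<^sup>2"
    by (simp only: power2_norm_eq_inner) (simp add: inner_diff_left inner_diff_right inner_commute)
  have i1: "inner (df v - gs - \<mu> *\<^sub>R b) (a - b) = inner (df v) (a - b) - inner gs (a - b) - \<mu> * (inner a b - (norm b)\<^sup>2)"
    by (simp add: inner_diff_left inner_diff_right inner_commute power2_norm_eq_inner)
  have i2: "inner gs (a - b) = inner gs a - inner gs b" by (simp add: inner_diff_right)
  show ?thesis
    unfolding I_f_def G a_def[symmetric] b_def[symmetric] uv i1 n i2
    by (simp add: algebra_simps)
qed

lemma h_aux:
  fixes L r \<mu> IF X N :: real
  assumes L0: "0 < L" and r0: "0 < r" and r1: "r < 1" and mu: "\<mu> = r^2 * L"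
    and e: "IF = L * X - L^2 * N / (2 * (L - \<mu>))"
  shows "(1 - r^2) * (IF / L) = (1 - r^2) * X - N / 2"
proof -
  have "r^2 < 1" using r0 r1 by (simp add: power_less_one_iff)
  then have ne: "L - r^2 * L \<noteq> 0" "1 - r^2 \<noteq> 0" using L0 by auto
  have "L - r^2 * L = L * (1 - r^2)" by (simp add: algebra_simps)
  then show ?thesis unfolding e mu using L0 ne by (simp add: field_simps power2_eq_square)
qed

theorem lemma6:
  fixes f :: "'a::{real_inner, complete_space} \<Rightarrow> real"
    and df :: "'a \<Rightarrow> 'a"
    and g :: "'a \<Rightarrow> ereal"
    and \<mu> L q :: real
    and xs :: 'a
    and x y zb z :: "nat \<Rightarrow> 'a"
    and k :: nat
  assumes mu_pos: "0 < \<mu>" and mu_L: "\<mu> < L"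
    and grad: "\<And>u. (f has_derivative (\<lambda>h. inner (df u) h)) (at u)"
    and sconv: "strongly_convex \<mu> f"
    and smooth: "\<And>u v. norm (df u - df v) \<le> L * norm (u - v)"
    and g_conv: "ereal_convex g" and g_proper: "ereal_proper g" and g_lsc: "lsc g"
    and q_def: "q = \<mu> / L"
    and xs_min: "\<And>u. ereal (f xs) + g xs \<le> ereal (f u) + g u"
    and z0: "z 0 = x 0"
    and y_def: "\<And>n. y n = (2 * sqrt q / (1 + sqrt q)) *\<^sub>R z n + ((1 - sqrt q) / (1 + sqrt q)) *\<^sub>R x n"
    and zb_def: "\<And>n. zb (Suc n) = (1 - sqrt q) *\<^sub>R z n + sqrt q *\<^sub>R y n - (1 / (sqrt q * L)) *\<^sub>R df (y n)"
    and z_def: "\<And>n. is_prox g (1 / (sqrt q * L)) (zb (Suc n)) (z (Suc n))"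
    and x_def: "\<And>n. x (Suc n) = y n - (1 / L) *\<^sub>R df (y n) - sqrt q *\<^sub>R (zb (Suc n) - z (Suc n))"
    and k_pos: "1 \<le> k"
  shows "ereal (\<mu> * (norm (z (Suc k) - xs))\<^sup>2) \<le> ereal ((1 - sqrt q)\<^sup>2) *
     (ereal ((1 - q) * I_f \<mu> L f df (y (k - 1)) xs)
      + ereal q * I_g g xs (z k) ((sqrt q * L) *\<^sub>R (zb k - z k))
      + ereal (sqrt q * (sqrt q - 1)) * I_g g (z k) xs (- df xs)
      + ereal (1 / (2 * L) * (norm ((sqrt q * L) *\<^sub>R (zb k - z k) - (- df xs)))\<^sup>2)
      + ereal (\<mu> * (norm (z k - xs))\<^sup>2))"
proof -
  obtain j where kj: "k = Suc j" using k_pos by (cases k) auto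
  define r where "r = sqrt q"
  have L0: "0 < L" using mu_pos mu_L by linarith
  have q0: "0 < q" using mu_pos L0 by (simp add: q_def)
  have q1: "q < 1" using mu_L L0 by (simp add: q_def)
  have r0: "0 < r" using q0 by (simp add: r_def)
  have r1: "r < 1" using q1 q0 by (simp add: r_def)
  have rq: "r^2 = q" using q0 by (simp add: r_def)
  have mu_r: "\<mu> = r^2 * L" using L0 by (simp add: rq q_def)
  have rL0: "0 < r * L" using r0 L0 by simp
  define Y where "Y = y j"
  define Yk where "Yk = y k"
  define Z where "Z = z k"
  define Z1 where "Z1 = z (Suc k)"
  define gs where "gs = df xs"
  define S where "S = (r * L) *\<^sub>R (zb k - z k)"
  define S1 where "S1 = (r * L) *\<^sub>R (zb (Suc k) - z (Suc k))"
  obtain gZ where gZ: "g Z = ereal gZ" using prox_fin[OF g_proper z_def[of j]] unfolding Z_def kj by auto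
  obtain gZ1 where gZ1: "g Z1 = ereal gZ1" using prox_fin[OF g_proper z_def[of k]] unfolding Z1_def by auto
  obtain gx where gx: "g xs = ereal gx" using xs_subgrad(1)[OF grad smooth g_conv g_proper xs_min] by auto
  have gam: "0 < 1 / (sqrt q * L)" using rL0 by (simp add: r_def)
  have J3e: "0 \<le> I_g g Z1 Z S"
    using prox_subgrad[OF g_conv g_proper z_def[of j] gam, of Z1] unfolding Z_def S_def kj r_def by simp
  have J5e: "0 \<le> I_g g xs Z1 S1"
    using prox_subgrad[OF g_conv g_proper z_def[of k] gam, of xs] unfolding Z1_def S1_def r_def by simp
  have J4e: "0 \<le> I_g g Z1 xs (- gs)"
    using xs_subgrad(2)[OF grad smooth g_conv g_proper xs_min] unfolding gs_def by simp
  have J3: "0 \<le> gZ1 - gZ - inner S (Z1 - Z)" using J3e unfolding I_g_def gZ gZ1 by simp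
  have J4: "0 \<le> gZ1 - gx - inner (- gs) (Z1 - xs)" using J4e unfolding I_g_def gx gZ1 by simp
  have J5: "0 \<le> gx - gZ1 - inner S1 (xs - Z1)" using J5e unfolding I_g_def gx gZ1 by simp
  have IF2: "0 \<le> I_f \<mu> L f df Y Yk" by (rule interp[OF grad smooth sconv mu_L])
  have IF3: "0 \<le> I_f \<mu> L f df Yk xs" by (rule interp[OF grad smooth sconv mu_L])
  have IF4: "0 \<le> I_f \<mu> L f df xs Yk" by (rule interp[OF grad smooth sconv mu_L])
  define a where "a = Y - xs"
  define zv where "zv = Z - xs"
  define y1 where "y1 = Yk - xs"
  define z1 where "z1 = Z1 - xs"
  define P0 where "P0 = (1/L) *\<^sub>R (df Y - gs - \<mu> *\<^sub>R a)"
  define P1 where "P1 = (1/L) *\<^sub>R (df Yk - gs - \<mu> *\<^sub>R y1)"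
  define s where "s = (1/L) *\<^sub>R (S + gs)"
  define s1 where "s1 = (1/L) *\<^sub>R (S1 + gs)"
  have P0r: "df Y - gs - \<mu> *\<^sub>R a = L *\<^sub>R P0" using L0 by (simp add: P0_def)
  have P1r: "df Yk - gs - \<mu> *\<^sub>R y1 = L *\<^sub>R P1" using L0 by (simp add: P1_def)
  have sr: "S + gs = L *\<^sub>R s" using L0 by (simp add: s_def)
  have s1r: "S1 + gs = L *\<^sub>R s1" using L0 by (simp add: s1_def)
  define F0 where "F0 = (f Y - f xs - inner gs a - \<mu>/2*(norm a)\<^sup>2) / L"
  define F1 where "F1 = (f Yk - f xs - inner gs y1 - \<mu>/2*(norm y1)\<^sup>2) / L"
  define G0 where "G0 = (gZ - gx + inner gs zv) / L"
  define G1 where "G1 = (gZ1 - gx + inner gs z1) / L"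
  define I1 where "I1 = I_f \<mu> L f df Y xs / L"
  define I2 where "I2 = I_f \<mu> L f df Y Yk / L"
  define I3 where "I3 = I_f \<mu> L f df Yk xs / L"
  define I4 where "I4 = I_f \<mu> L f df xs Yk / L"

  have L0': "L \<noteq> 0" using L0 by simp
  have xk: "x k = Y - (1 / L) *\<^sub>R df Y - r *\<^sub>R (zb k - z k)"
    unfolding kj Y_def r_def by (rule x_def)
  have Ykd: "Yk = (2 * r / (1 + r)) *\<^sub>R Z + ((1 - r) / (1 + r)) *\<^sub>R x k"
    unfolding Yk_def Z_def r_def by (rule y_def)
  have zbk1: "zb (Suc k) = (1 - r) *\<^sub>R Z + r *\<^sub>R Yk - (1 / (r * L)) *\<^sub>R df Yk"
    unfolding Yk_def Z_def r_def by (rule zb_def)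
  have xk2: "x k - xs = (1 - r^2) *\<^sub>R a - P0 - s"
  proof -
    have "P0 + s = (1/L) *\<^sub>R df Y - r^2 *\<^sub>R a + r *\<^sub>R (zb k - z k)"
      unfolding P0_def s_def S_def mu_r using L0'
      by (simp add: algebra_simps scaleR_diff_right)
    then show ?thesis unfolding xk a_def by (simp add: algebra_simps)
  qed
  have hyv: "(1 + r) *\<^sub>R y1 = (2 * r) *\<^sub>R zv + (1 - r) *\<^sub>R ((1 - r^2) *\<^sub>R a - P0 - s)"
  proof -
    have "(1 + r) *\<^sub>R Yk = (2 * r) *\<^sub>R Z + (1 - r) *\<^sub>R x k"
      unfolding Ykd using r0 by (simp add: scaleR_add_right)
    moreover have r2: "\<And>v::'a. (r * 2) *\<^sub>R v = r *\<^sub>R v + r *\<^sub>R v"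
      by (metis mult_2_right scaleR_left_distrib)
    ultimately have "(1 + r) *\<^sub>R y1 = (2 * r) *\<^sub>R zv + (1 - r) *\<^sub>R (x k - xs)"
      unfolding y1_def zv_def by (simp add: algebra_simps)
    then show ?thesis unfolding xk2 .
  qed
  have hzv: "r *\<^sub>R z1 = (r * (1 - r)) *\<^sub>R zv - P1 - s1"
  proof -
    have Z1e: "r *\<^sub>R Z1 = r *\<^sub>R zb (Suc k) - (1/L) *\<^sub>R S1"
      unfolding S1_def Z1_def using L0' by (simp add: algebra_simps)
    have e2: "r *\<^sub>R zb (Suc k) = (r * (1 - r)) *\<^sub>R Z + r^2 *\<^sub>R Yk - (1 / L) *\<^sub>R df Yk"
      unfolding zbk1 using r0 L0' by (simp add: algebra_simps power2_eq_square)
    have e3: "P1 + s1 = (1 / L) *\<^sub>R df Yk - r^2 *\<^sub>R y1 + (1/L) *\<^sub>R S1"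
      unfolding P1_def s1_def mu_r using L0' by (simp add: algebra_simps scaleR_diff_right)
    have "r *\<^sub>R z1 = (r * (1 - r)) *\<^sub>R zv - (P1 + s1)"
      unfolding e3 z1_def zv_def y1_def scaleR_diff_right Z1e e2
      by (simp add: algebra_simps power2_eq_square)
    then show ?thesis by (simp add: algebra_simps)
  qed

  define qq where "qq = inner P0 P0"
  define pq where "pq = inner P0 P1"
  define pp where "pp = inner P1 P1"
  define pa where "pa = inner P1 a"
  define py where "py = inner P1 y1"
  define pz where "pz = inner P1 zv"
  define ps where "ps = inner P1 s"
  define sz where "sz = inner s zv"
  define ss where "ss = inner s s"
  define zz where "zz = inner zv zv"
  define ww where "ww = inner z1 z1"
  define sw where "sw = inner s z1"
  define tw where "tw = inner s1 z1"
  define st where "st = inner s s1"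
  define tt where "tt = inner s1 s1"
  define tz where "tz = inner s1 zv"
  define pt where "pt = inner P1 s1"
  have hy: "(1-r^2) * py = (1-r) * (2 * r * pz + (1-r) * ((1-r^2) * pa - pq - ps))"
  proof -
    have "inner P1 ((1 + r) *\<^sub>R y1) = inner P1 ((2 * r) *\<^sub>R zv + (1 - r) *\<^sub>R ((1 - r^2) *\<^sub>R a - P0 - s))"
      by (simp only: hyv)
    then have "(1 + r) * py = 2 * r * pz + (1-r) * ((1-r^2) * pa - pq - ps)"
      unfolding py_def pz_def pa_def pq_def ps_def
      by (simp add: inner_add_right inner_diff_right inner_commute)
    then have "(1-r) * ((1 + r) * py) = (1-r) * (2 * r * pz + (1-r) * ((1-r^2) * pa - pq - ps))" by simp
    then show ?thesis by (simp add: algebra_simps power2_eq_square)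
  qed
  have hz1: "r^2 * ww = r^2 * (1-r)^2 * zz + pp + tt - 2 * r * (1-r) * pz - 2 * r * (1-r) * tz + 2 * pt"
  proof -
    have "inner (r *\<^sub>R z1) (r *\<^sub>R z1) = inner ((r * (1 - r)) *\<^sub>R zv - P1 - s1) ((r * (1 - r)) *\<^sub>R zv - P1 - s1)"
      by (simp only: hzv)
    then show ?thesis
      unfolding ww_def zz_def pp_def tt_def pz_def tz_def pt_def
      by (simp add: inner_add_right inner_diff_right inner_diff_left inner_commute algebra_simps power2_eq_square)
  qed
  have hz2: "r * sw = r * (1-r) * sz - ps - st"
  proof -
    have "inner s (r *\<^sub>R z1) = inner s ((r * (1 - r)) *\<^sub>R zv - P1 - s1)"
      by (simp only: hzv)
    then show ?thesis
      unfolding sw_def sz_def ps_def st_def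
      by (simp add: inner_diff_right inner_commute)
  qed
  have hz3: "r * tw = r * (1-r) * tz - pt - tt"
  proof -
    have "inner s1 (r *\<^sub>R z1) = inner s1 ((r * (1 - r)) *\<^sub>R zv - P1 - s1)"
      by (simp only: hzv)
    then show ?thesis
      unfolding tw_def tz_def pt_def tt_def
      by (simp add: inner_diff_right inner_commute)
  qed

  have nP0: "(norm (L *\<^sub>R P0))\<^sup>2 = L^2 * qq" unfolding qq_def
    by (simp add: power2_norm_eq_inner[symmetric] power_mult_distrib)
  have nP1: "(norm (L *\<^sub>R P1))\<^sup>2 = L^2 * pp" unfolding pp_def
    by (simp add: power2_norm_eq_inner[symmetric] power_mult_distrib)
  have nP01: "(norm (L *\<^sub>R P0 - L *\<^sub>R P1))\<^sup>2 = L^2 * (qq - 2 * pq + pp)"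
  proof -
    have "(norm (L *\<^sub>R P0 - L *\<^sub>R P1))\<^sup>2 = L^2 * (norm (P0 - P1))\<^sup>2"
      by (simp add: scaleR_diff_right[symmetric] power_mult_distrib)
    also have "(norm (P0 - P1))\<^sup>2 = qq - 2 * pq + pp" unfolding qq_def pq_def pp_def
      by (simp only: power2_norm_eq_inner) (simp add: inner_diff_left inner_diff_right inner_commute)
    finally show ?thesis .
  qed
  have F0L: "f Y - f xs - inner gs a - \<mu>/2*(norm a)\<^sup>2 = L * F0" using L0 by (simp add: F0_def)
  have F1L: "f Yk - f xs - inner gs y1 - \<mu>/2*(norm y1)\<^sup>2 = L * F1" using L0 by (simp add: F1_def)
  have If1: "I_f \<mu> L f df Y xs = L * F0 - L^2 * qq / (2 * (L - \<mu>))"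
  proof -
    have "I_f \<mu> L f df Y xs = (f Y - f xs - inner gs a - \<mu>/2*(norm a)\<^sup>2) - (norm (df Y - gs - \<mu> *\<^sub>R a))\<^sup>2 / (2*(L-\<mu>))"
      using If_red[where fx="f xs" and gs=gs and xs=xs, of \<mu> L f df Y xs] unfolding a_def[symmetric]
      by (simp add: gs_def)
    then show ?thesis unfolding F0L P0r nP0 .
  qed
  have If2: "I_f \<mu> L f df Y Yk = L * (F0 - F1 - pa + py) - L^2 * (qq - 2 * pq + pp) / (2 * (L - \<mu>))"
  proof -
    have "I_f \<mu> L f df Y Yk = (f Y - f xs - inner gs a - \<mu>/2*(norm a)\<^sup>2) - (f Yk - f xs - inner gs y1 - \<mu>/2*(norm y1)\<^sup>2)
       - inner (df Yk - gs - \<mu> *\<^sub>R y1) (a - y1) - (norm ((df Y - gs - \<mu> *\<^sub>R a) - (df Yk - gs - \<mu> *\<^sub>R y1)))\<^sup>2 / (2*(L-\<mu>))"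
      using If_red[where fx="f xs" and gs=gs and xs=xs, of \<mu> L f df Y Yk] unfolding a_def[symmetric] y1_def[symmetric] .
    then show ?thesis unfolding F0L F1L P0r P1r nP01 pa_def py_def
      by (simp add: inner_diff_right algebra_simps)
  qed
  have If3: "I_f \<mu> L f df Yk xs = L * F1 - L^2 * pp / (2 * (L - \<mu>))"
  proof -
    have "I_f \<mu> L f df Yk xs = (f Yk - f xs - inner gs y1 - \<mu>/2*(norm y1)\<^sup>2) - (norm (df Yk - gs - \<mu> *\<^sub>R y1))\<^sup>2 / (2*(L-\<mu>))"
      using If_red[where fx="f xs" and gs=gs and xs=xs, of \<mu> L f df Yk xs] unfolding y1_def[symmetric]
      by (simp add: gs_def)
    then show ?thesis unfolding F1L P1r nP1 .
  qed
  have If4: "I_f \<mu> L f df xs Yk = L * (- F1 + py) - L^2 * pp / (2 * (L - \<mu>))"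
  proof -
    have "I_f \<mu> L f df xs Yk = - (f Yk - f xs - inner gs y1 - \<mu>/2*(norm y1)\<^sup>2)
       + inner (df Yk - gs - \<mu> *\<^sub>R y1) y1 - (norm (df Yk - gs - \<mu> *\<^sub>R y1))\<^sup>2 / (2*(L-\<mu>))"
      using If_red[where fx="f xs" and gs=gs and xs=xs, of \<mu> L f df xs Yk] unfolding y1_def[symmetric]
      by (simp add: gs_def inner_minus_right norm_minus_commute)
    then show ?thesis unfolding F1L P1r nP1 py_def by (simp add: algebra_simps)
  qed
  have h1: "(1-r^2) * I1 = (1-r^2) * F0 - qq/2" unfolding I1_def by (rule h_aux[OF L0 r0 r1 mu_r If1])
  have h2: "(1-r^2) * I2 = (1-r^2) * (F0 - F1 - pa + py) - (qq - 2 * pq + pp)/2" unfolding I2_def by (rule h_aux[OF L0 r0 r1 mu_r If2])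
  have h3: "(1-r^2) * I3 = (1-r^2) * F1 - pp/2" unfolding I3_def by (rule h_aux[OF L0 r0 r1 mu_r If3])
  have h4: "(1-r^2) * I4 = (1-r^2) * (-F1 + py) - pp/2" unfolding I4_def by (rule h_aux[OF L0 r0 r1 mu_r If4])
  have core: "(1-r)^2 * ((1-r^2) * I1 + r^2 * (-G0 + sz) + r * (r-1) * G0 + ss/2 + r^2 * zz) - r^2 * ww
    = (1-r)^2 * (1-r^2) * I2 + (1-r^2) * I3 + r * (2-r) * (1-r^2) * I4 + r * (1-r)^2 * (G1 - G0 - (sw - sz))
      + r * (2-(1-r)^2) * G1 + 2 * r * (-G1 + tw) + (1-r)^2/2 * (ss - 2 * st + tt) + (1-(1-r)^2/2) * tt"
    by (rule core_real[OF h1 h2 h3 h4 hy hz1 hz2 hz3])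
  have Se: "S = L *\<^sub>R s - gs" using sr by (simp add: algebra_simps)
  have S1e: "S1 = L *\<^sub>R s1 - gs" using s1r by (simp add: algebra_simps)
  have dZ: "Z1 - Z = z1 - zv" by (simp add: z1_def zv_def)
  have J1r: "gx - gZ - inner S (xs - Z) = L * (-G0 + sz)"
  proof -
    have e: "xs - Z = - zv" by (simp add: zv_def)
    show ?thesis unfolding e G0_def sz_def Se using L0'
      by (simp add: inner_diff_left field_simps)
  qed
  have J2r: "gZ - gx - inner (- gs) (Z - xs) = L * G0"
    unfolding G0_def zv_def using L0' by simp
  have J3r: "gZ1 - gZ - inner S (Z1 - Z) = L * (G1 - G0 - (sw - sz))"
    unfolding G0_def G1_def sz_def sw_def Se dZ using L0'
    by (simp add: inner_diff_left inner_diff_right field_simps)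
  have J4r: "gZ1 - gx - inner (- gs) (Z1 - xs) = L * G1"
    unfolding G1_def z1_def using L0' by simp
  have J5r: "gx - gZ1 - inner S1 (xs - Z1) = L * (-G1 + tw)"
  proof -
    have e: "xs - Z1 = - z1" by (simp add: z1_def)
    show ?thesis unfolding e G1_def tw_def S1e using L0'
      by (simp add: inner_diff_left field_simps)
  qed
  have K3: "0 \<le> G1 - G0 - (sw - sz)" using J3 unfolding J3r using L0 by (simp add: zero_le_mult_iff)
  have K4: "0 \<le> G1" using J4 unfolding J4r using L0 by (simp add: zero_le_mult_iff)
  have K5: "0 \<le> -G1 + tw" using J5 unfolding J5r using L0 by (simp add: zero_le_mult_iff)
  have K2: "0 \<le> I2" unfolding I2_def using IF2 L0 by simp
  have K3': "0 \<le> I3" unfolding I3_def using IF3 L0 by simp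
  have K4': "0 \<le> I4" unfolding I4_def using IF4 L0 by simp
  have Kss: "0 \<le> ss - 2 * st + tt"
  proof -
    have "ss - 2 * st + tt = inner (s - s1) (s - s1)" unfolding ss_def st_def tt_def
      by (simp add: inner_diff_left inner_diff_right inner_commute)
    then show ?thesis by simp
  qed
  have Ktt: "0 \<le> tt" unfolding tt_def by simp
  have r2: "r^2 < 1" using r0 r1 by (simp add: power_less_one_iff)
  have c1: "0 \<le> 1 - r^2" using r2 by simp
  have c2: "0 \<le> 2 - r" using r1 by simp
  have rr: "(1-r)^2 \<le> 1" using r0 r1 by (simp add: power_le_one)
  have c3: "0 \<le> 1 - (1-r)^2/2" using rr by simp
  have c4: "0 \<le> 2 - (1-r)^2" using rr by simp
  have p1: "0 \<le> (1-r)^2 * (1-r^2) * I2" using c1 K2 by simp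
  have p2: "0 \<le> (1-r^2) * I3" using c1 K3' by simp
  have p3: "0 \<le> r * (2-r) * (1-r^2) * I4" using c1 c2 K4' r0 by simp
  have p4: "0 \<le> r * (1-r)^2 * (G1 - G0 - (sw - sz))" using K3 r0 by simp
  have p5: "0 \<le> r * (2-(1-r)^2) * G1" using K4 c4 r0 by simp
  have p6: "0 \<le> 2 * r * (-G1 + tw)" using K5 r0 by simp
  have p7: "0 \<le> (1-r)^2/2 * (ss - 2 * st + tt)" using Kss by simp
  have p8: "0 \<le> (1-(1-r)^2/2) * tt" using c3 Ktt by simp
  have coreN: "0 \<le> (1-r)^2 * ((1-r^2) * I1 + r^2 * (-G0 + sz) + r * (r-1) * G0 + ss/2 + r^2 * zz) - r^2 * ww"
    unfolding core using p1 p2 p3 p4 p5 p6 p7 p8 by linarith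
  have IF1: "I_f \<mu> L f df Y xs = L * I1" unfolding I1_def using L0' by simp
  have nS: "(norm (S - (- gs)))\<^sup>2 = L^2 * ss"
  proof -
    have "S - (- gs) = L *\<^sub>R s" using sr by simp
    then show ?thesis unfolding ss_def by (simp add: power2_norm_eq_inner[symmetric] power_mult_distrib)
  qed
  have nZ: "\<mu> * (norm (Z - xs))\<^sup>2 = r^2 * L * zz" unfolding mu_r zz_def zv_def by (simp add: power2_norm_eq_inner)
  have nZ1: "\<mu> * (norm (Z1 - xs))\<^sup>2 = r^2 * L * ww" unfolding mu_r ww_def z1_def by (simp add: power2_norm_eq_inner)
  have R: "\<mu> * (norm (Z1 - xs))\<^sup>2 \<le> (1-r)^2 * ((1-q) * I_f \<mu> L f df Y xs + q * (L * (-G0 + sz)) + r * (r-1) * (L * G0)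
      + 1/(2*L) * (norm (S - (- gs)))\<^sup>2 + \<mu> * (norm (Z - xs))\<^sup>2)"
  proof -
    have "(1-r)^2 * ((1-q) * I_f \<mu> L f df Y xs + q * (L * (-G0 + sz)) + r * (r-1) * (L * G0)
      + 1/(2*L) * (norm (S - (- gs)))\<^sup>2 + \<mu> * (norm (Z - xs))\<^sup>2) - \<mu> * (norm (Z1 - xs))\<^sup>2
      = L * ((1-r)^2 * ((1-r^2) * I1 + r^2 * (-G0 + sz) + r * (r-1) * G0 + ss/2 + r^2 * zz) - r^2 * ww)"
      unfolding IF1 nS nZ nZ1 rq[symmetric] using L0' by (simp add: field_simps power2_eq_square)
    moreover have "0 \<le> L * ((1-r)^2 * ((1-r^2) * I1 + r^2 * (-G0 + sz) + r * (r-1) * G0 + ss/2 + r^2 * zz) - r^2 * ww)"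
      using L0 coreN by simp
    ultimately show ?thesis by linarith
  qed
  have kj1: "k - 1 = j" by (simp add: kj)
  have Ig1: "I_g g xs Z S = ereal (L * (-G0 + sz))" unfolding I_g_def gx gZ J1r[symmetric] by simp
  have Ig2: "I_g g Z xs (- gs) = ereal (L * G0)" unfolding I_g_def gx gZ J2r[symmetric] by simp
  show ?thesis
    unfolding r_def[symmetric] kj1 Y_def[symmetric] gs_def[symmetric]
    unfolding S_def[symmetric]
    unfolding Z_def[symmetric] Z1_def[symmetric]
    unfolding Ig1 Ig2
    using R by (simp only: plus_ereal.simps(1) times_ereal.simps(1) ereal_less_eq(3))
qed

end
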